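(* Let $(V,E,c,p)$ be a PCSTP instance and let $\{v_i,v_j\}\in E$. If $$c(\{v_i,v_j\}) > d_{pc}(v_i,v_j),$$ then $\{v_i,v_j\}$ is not contained in any optimal solution of the instance.
   Context: A prize-collecting Steiner tree (PCSTP) instance $(V,E,c,p)$ consists of a finite, undirected, connected graph $G=(V,E)$, edge costs $c:E\to\mathbb{Q}_{>0}$ and vertex prizes $p:V\to\mathbb{Q}_{\ge 0}$. For a tree $S\subseteq G$ (connected acyclic subgraph with at least one vertex) let $C(S):=\sum_{e\in E(S)}c(e)+\sum_{v\in V\setminus V(S)}p(v)$; an optimal solution is a tree minimizing $C$. Let $T_p:=\{v\in V: p(v)>0\}$ (potential terminals). For $v_i,v_j\in V$, a finite walk $W=(v_{i_1},e_{i_1},v_{i_2},\dots,e_{i_{r-1}},v_{i_r})$ with $v_{i_1}=v_i$, $v_{i_r}=v_j$ is a prize-constrained $(v_i,v_j)$-walk if no vertex of $T_p\cup\{v_i,v_j\}$ occurs more than once in the sequence. $V(W)$, $E(W)$ denote the sets of vertices and edges of $W$. For $1\le k\le l\le r$, $W[k,l]$ denotes the subwalk $(v_{i_k},e_{i_k},\dots,v_{i_l})$ (itself a prize-constrained $(v_{i_k},v_{i_l})$-walk). The prize-collecting cost of a walk $W$ from $a$ to $b$ is $c_{pc}(W):=\sum_{e\in E(W)}c(e)-\sum_{v\in V(W)\setminus\{a,b\}}p(v)$. The prize-constrained length of a prize-constrained $(v_i,v_j)$-walk $W$ is $l_{pc}(W):=\max\{c_{pc}(W[k,l]) : 1\le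 k\le l\le r,\ v_{i_k},v_{i_l}\in T_p\cup\{v_i,v_j\}\}$. The prize-constrained distance is $d_{pc}(v_i,v_j):=\inf\{l_{pc}(W): W \text{ a prize-constrained } (v_i,v_j)\text{-walk}\}$. *)

theory Defs
  imports Complex_Main
begin

(* Walks are nonempty vertex lists (the graph is simple, so the edge between
   consecutive vertices is determined). Indices are 0-based. *)

definition is_walk :: "'v set \<Rightarrow> 'v set set \<Rightarrow> 'v list \<Rightarrow> bool" where
  "is_walk V E W \<longleftrightarrow> W \<noteq> [] \<and> set W \<subseteq> V \<and>
     (\<forall>k. Suc k < length W \<longrightarrow> {W ! k, W ! Suc k} \<in> E)"

definition walk_edges :: "'v list \<Rightarrow> 'v set set" where
  "walk_edges W = {{W ! k, W ! Suc k} | k. Suc k < length W}"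

definition simple_graph :: "'v set \<Rightarrow> 'v set set \<Rightarrow> bool" where
  "simple_graph V E \<longleftrightarrow> (\<forall>e\<in>E. \<exists>x y. e = {x, y} \<and> x \<noteq> y \<and> x \<in> V \<and> y \<in> V)"

definition connected_graph :: "'v set \<Rightarrow> 'v set set \<Rightarrow> bool" where
  "connected_graph V E \<longleftrightarrow> (\<forall>x\<in>V. \<forall>y\<in>V. \<exists>W. is_walk V E W \<and> hd W = x \<and> last W = y)"

definition has_cycle :: "'v set \<Rightarrow> 'v set set \<Rightarrow> bool" where
  "has_cycle V E \<longleftrightarrow> (\<exists>W. is_walk V E W \<and> distinct W \<and> length W \<ge> 3 \<and> {last W, hd W} \<in> E)"

definition is_subtree :: "'v set \<Rightarrow> 'v set set \<Rightarrow> 'v set \<Rightarrow> 'v set set \<Rightarrow> bool" where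
  "is_subtree V E VS ES \<longleftrightarrow> VS \<noteq> {} \<and> VS \<subseteq> V \<and> ES \<subseteq> E \<and> (\<forall>e\<in>ES. e \<subseteq> VS) \<and>
     connected_graph VS ES \<and> \<not> has_cycle VS ES"

definition pcst_cost :: "'v set \<Rightarrow> ('v set \<Rightarrow> real) \<Rightarrow> ('v \<Rightarrow> real) \<Rightarrow> 'v set \<Rightarrow> 'v set set \<Rightarrow> real" where
  "pcst_cost V c p VS ES = (\<Sum>e\<in>ES. c e) + (\<Sum>v\<in>V - VS. p v)"

definition optimal_solution ::
  "'v set \<Rightarrow> 'v set set \<Rightarrow> ('v set \<Rightarrow> real) \<Rightarrow> ('v \<Rightarrow> real) \<Rightarrow> 'v set \<Rightarrow> 'v set set \<Rightarrow> bool" where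
  "optimal_solution V E c p VS ES \<longleftrightarrow> is_subtree V E VS ES \<and>
     (\<forall>VS' ES'. is_subtree V E VS' ES' \<longrightarrow> pcst_cost V c p VS ES \<le> pcst_cost V c p VS' ES')"

definition Tp :: "'v set \<Rightarrow> ('v \<Rightarrow> real) \<Rightarrow> 'v set" where
  "Tp V p = {v \<in> V. p v > 0}"

definition pc_walk :: "'v set \<Rightarrow> 'v set set \<Rightarrow> ('v \<Rightarrow> real) \<Rightarrow> 'v \<Rightarrow> 'v \<Rightarrow> 'v list \<Rightarrow> bool" where
  "pc_walk V E p a b W \<longleftrightarrow> is_walk V E W \<and> hd W = a \<and> last W = b \<and>
     (\<forall>x \<in> Tp V p \<union> {a, b}. count_list W x \<le> 1)"

(* subwalk W[k,l], 0-based, k \<le> l < length W *)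
definition subwalk :: "'v list \<Rightarrow> nat \<Rightarrow> nat \<Rightarrow> 'v list" where
  "subwalk W k l = drop k (take (Suc l) W)"

definition c_pc :: "('v set \<Rightarrow> real) \<Rightarrow> ('v \<Rightarrow> real) \<Rightarrow> 'v list \<Rightarrow> real" where
  "c_pc c p W = (\<Sum>e\<in>walk_edges W. c e) - (\<Sum>v\<in>set W - {hd W, last W}. p v)"

definition l_pc :: "'v set \<Rightarrow> ('v set \<Rightarrow> real) \<Rightarrow> ('v \<Rightarrow> real) \<Rightarrow> 'v \<Rightarrow> 'v \<Rightarrow> 'v list \<Rightarrow> real" where
  "l_pc V c p a b W = Max {c_pc c p (subwalk W k l) | k l.
      k \<le> l \<and> l < length W \<and> W ! k \<in> Tp V p \<union> {a, b} \<and> W ! l \<in> Tp V p \<union> {a, b}}"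

definition d_pc :: "'v set \<Rightarrow> 'v set set \<Rightarrow> ('v set \<Rightarrow> real) \<Rightarrow> ('v \<Rightarrow> real) \<Rightarrow> 'v \<Rightarrow> 'v \<Rightarrow> real" where
  "d_pc V E c p a b = Inf {l_pc V c p a b W | W. pc_walk V E p a b W}"

end

theory Submission
  imports Defs
begin

definition reach :: "'v set \<Rightarrow> 'v set set \<Rightarrow> 'v \<Rightarrow> 'v \<Rightarrow> bool" where
  "reach VS F x y \<longleftrightarrow> (\<exists>W. is_walk VS F W \<and> hd W = x \<and> last W = y)"

lemma is_walk_Cons:
  assumes "W \<noteq> []"
  shows "is_walk VS F (x # W) \<longleftrightarrow> x \<in> VS \<and> {x, hd W} \<in> F \<and> is_walk VS F W"
proof
  assume h: "is_walk VS F (x # W)"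
  then have "{(x#W) ! 0, (x#W) ! Suc 0} \<in> F" using assms unfolding is_walk_def by auto
  then have "{x, hd W} \<in> F" using assms by (simp add: hd_conv_nth)
  moreover have "\<forall>k. Suc k < length W \<longrightarrow> {W ! k, W ! Suc k} \<in> F"
  proof (intro allI impI)
    fix k assume "Suc k < length W"
    then have "{(x#W) ! Suc k, (x#W) ! Suc (Suc k)} \<in> F" using h unfolding is_walk_def by auto
    then show "{W ! k, W ! Suc k} \<in> F" by simp
  qed
  ultimately show "x \<in> VS \<and> {x, hd W} \<in> F \<and> is_walk VS F W" using h assms unfolding is_walk_def by auto
next
  assume h: "x \<in> VS \<and> {x, hd W} \<in> F \<and> is_walk VS F W"
  show "is_walk VS F (x # W)" unfolding is_walk_def
  proof (intro conjI allI impI)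
    fix k assume k: "Suc k < length (x # W)"
    show "{(x # W) ! k, (x # W) ! Suc k} \<in> F"
    proof (cases k)
      case 0 then show ?thesis using h assms by (simp add: hd_conv_nth)
    next
      case (Suc m) then show ?thesis using h k unfolding is_walk_def by auto
    qed
  qed (use h in \<open>auto simp: is_walk_def\<close>)
qed

lemma closure_last:
  assumes "is_walk VS F W" "\<And>a b. a \<in> VS \<Longrightarrow> {a, b} \<in> F \<Longrightarrow> b \<in> R \<Longrightarrow> a \<in> R" "last W \<in> R"
  shows "set W \<subseteq> R"
  using assms
proof (induction W)
  case Nil then show ?case by simp
next
  case (Cons x W)
  show ?case
  proof (cases "W = []")
    case True then show ?thesis using Cons.prems by simp
  next
    case False
    then have w: "x \<in> VS" "{x, hd W} \<in> F" "is_walk VS F W" using Cons.prems(1) is_walk_Cons by metis+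
    have "set W \<subseteq> R" using Cons.IH[OF w(3) Cons.prems(2)] Cons.prems(3) False by simp
    then have "hd W \<in> R" using False by (meson hd_in_set subsetD)
    then have "x \<in> R" using Cons.prems(2) w by blast
    then show ?thesis using \<open>set W \<subseteq> R\<close> by simp
  qed
qed

lemma closure_hd:
  assumes "is_walk VS F W" "\<And>a b. a \<in> VS \<Longrightarrow> {a, b} \<in> F \<Longrightarrow> b \<in> R \<Longrightarrow> a \<in> R" "hd W \<in> R"
  shows "set W \<subseteq> R"
  using assms
proof (induction W)
  case Nil then show ?case by simp
next
  case (Cons x W)
  show ?case
  proof (cases "W = []")
    case True then show ?thesis using Cons.prems by simp
  next
    case False
    then have w: "x \<in> VS" "{x, hd W} \<in> F" "is_walk VS F W" using Cons.prems(1) is_walk_Cons by metis+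
    have "hd W \<in> set W" using False by simp
    then have "hd W \<in> VS" using w(3) unfolding is_walk_def by auto
    moreover have "{hd W, x} \<in> F" using w(2) by (simp add: insert_commute)
    ultimately have "hd W \<in> R" using Cons.prems(2,3) by auto
    then show ?thesis using Cons.IH[OF w(3) Cons.prems(2)] Cons.prems(3) by simp
  qed
qed

lemma reach_refl: "x \<in> VS \<Longrightarrow> reach VS F x x"
  unfolding reach_def by (rule exI[of _ "[x]"]) (auto simp: is_walk_def)

lemma reach_step: "x \<in> VS \<Longrightarrow> {x, y} \<in> F \<Longrightarrow> reach VS F y z \<Longrightarrow> reach VS F x z"
  unfolding reach_def
proof -
  assume a: "x \<in> VS" "{x, y} \<in> F" "\<exists>W. is_walk VS F W \<and> hd W = y \<and> last W = z"
  then obtain W where W: "is_walk VS F W" "hd W = y" "last W = z" by blast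
  then have "W \<noteq> []" unfolding is_walk_def by auto
  then have "is_walk VS F (x # W)" using W a is_walk_Cons by metis
  then show "\<exists>W. is_walk VS F W \<and> hd W = x \<and> last W = z" using W \<open>W \<noteq> []\<close> by (intro exI[of _ "x#W"]) auto
qed

lemma reach_trans:
  assumes "reach VS F x y" "reach VS F y z" shows "reach VS F x z"
proof -
  obtain W where W: "is_walk VS F W" "hd W = x" "last W = y" using assms(1) unfolding reach_def by blast
  have "set W \<subseteq> {w. reach VS F w z}"
    by (rule closure_last[OF W(1)]) (use reach_step assms(2) W(3) in auto)
  moreover have "x \<in> set W" using W unfolding is_walk_def by auto
  ultimately show ?thesis by auto
qed

lemma reach_in: "reach VS F x y \<Longrightarrow> x \<in> VS \<and> y \<in> VS"
  unfolding reach_def is_walk_def by auto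

lemma reach_sym:
  assumes "reach VS F x y" shows "reach VS F y x"
proof -
  obtain W where W: "is_walk VS F W" "hd W = x" "last W = y" using assms(1) unfolding reach_def by blast
  have xV: "x \<in> VS" using reach_in[OF assms] by simp
  have "set W \<subseteq> {w. reach VS F w x}"
  proof (rule closure_hd[OF W(1)])
    show "hd W \<in> {w. reach VS F w x}" using W(2) reach_refl[OF xV] by simp
  next
    fix a b assume "a \<in> VS" "{a, b} \<in> F" "b \<in> {w. reach VS F w x}"
    then show "a \<in> {w. reach VS F w x}" using reach_step[of a VS b F x] by simp
  qed
  moreover have "y \<in> set W" using W unfolding is_walk_def by auto
  ultimately show ?thesis by auto
qed

lemma reach_mono: "reach VS F x y \<Longrightarrow> VS \<subseteq> VS' \<Longrightarrow> F \<subseteq> F' \<Longrightarrow> reach VS' F' x y"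
  unfolding reach_def is_walk_def by blast

lemma connected_root:
  assumes "r \<in> VS" "\<And>x. x \<in> VS \<Longrightarrow> reach VS F x r"
  shows "connected_graph VS F"
  unfolding connected_graph_def
  using assms reach_trans reach_sym unfolding reach_def[symmetric] by metis

lemma connected_reach: "connected_graph VS F \<Longrightarrow> x \<in> VS \<Longrightarrow> y \<in> VS \<Longrightarrow> reach VS F x y"
  unfolding connected_graph_def reach_def by blast

lemma subwalk_length: "u < length W \<Longrightarrow> length (subwalk W s u) = Suc u - s"
  unfolding subwalk_def by simp

lemma subwalk_nth: "u < length W \<Longrightarrow> s + i \<le> u \<Longrightarrow> subwalk W s u ! i = W ! (s + i)"
  unfolding subwalk_def by simp

lemma subwalk_hd: "s \<le> u \<Longrightarrow> u < length W \<Longrightarrow> hd (subwalk W s u) = W ! s"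
proof -
  assume a: "s \<le> u" "u < length W"
  then have "subwalk W s u \<noteq> []" using subwalk_length[of u W s] by auto
  then show ?thesis using subwalk_nth[of u W s 0] a by (simp add: hd_conv_nth)
qed

lemma subwalk_last: "s \<le> u \<Longrightarrow> u < length W \<Longrightarrow> last (subwalk W s u) = W ! u"
proof -
  assume a: "s \<le> u" "u < length W"
  then have "subwalk W s u \<noteq> []" using subwalk_length[of u W s] by auto
  then show ?thesis using subwalk_nth[of u W s "u - s"] subwalk_length[of u W s] a by (simp add: last_conv_nth)
qed

lemma subwalk_set: "s \<le> u \<Longrightarrow> u < length W \<Longrightarrow> x \<in> set (subwalk W s u) \<Longrightarrow> \<exists>j. s \<le> j \<and> j \<le> u \<and> x = W ! j"
proof -
  assume a: "s \<le> u" "u < length W" "x \<in> set (subwalk W s u)"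
  then obtain i where i: "i < length (subwalk W s u)" "x = subwalk W s u ! i" by (auto simp: in_set_conv_nth)
  then have "s + i \<le> u" using subwalk_length[OF a(2)] by simp
  then show ?thesis using i subwalk_nth[OF a(2)] by (intro exI[of _ "s+i"]) auto
qed

lemma subwalk_nonempty: "s \<le> u \<Longrightarrow> u < length W \<Longrightarrow> subwalk W s u \<noteq> []"
  using subwalk_length[of u W s] by auto

lemma walk_self: "W \<noteq> [] \<Longrightarrow> is_walk (set W) (walk_edges W) W"
  unfolding is_walk_def walk_edges_def by auto

lemma walk_edges_sub: "is_walk V E W \<Longrightarrow> walk_edges W \<subseteq> E"
  unfolding is_walk_def walk_edges_def by auto

lemma walk_edges_in: "e \<in> walk_edges W \<Longrightarrow> e \<subseteq> set W"
  unfolding walk_edges_def by auto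

lemma subwalk_walk:
  assumes "is_walk V E W" "s \<le> u" "u < length W"
  shows "is_walk V E (subwalk W s u)"
  unfolding is_walk_def
proof (intro conjI allI impI)
  show "subwalk W s u \<noteq> []" using subwalk_nonempty assms by blast
  show "set (subwalk W s u) \<subseteq> V" using assms unfolding is_walk_def subwalk_def
    by (meson order_trans set_drop_subset set_take_subset)
  fix k assume k: "Suc k < length (subwalk W s u)"
  then have "s + Suc k \<le> u" using subwalk_length[OF assms(3)] by simp
  then have "subwalk W s u ! k = W ! (s + k)" "subwalk W s u ! Suc k = W ! Suc (s + k)"
    using subwalk_nth[OF assms(3)] by auto
  moreover have "Suc (s + k) < length W" using \<open>s + Suc k \<le> u\<close> assms(3) by simp
  ultimately show "{subwalk W s u ! k, subwalk W s u ! Suc k} \<in> E" using assms(1) unfolding is_walk_def by auto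
qed

lemma cycle_edge_notin:
  assumes "distinct W" "length W \<ge> 3" "Suc k < length W"
  shows "{W ! k, W ! Suc k} \<noteq> {last W, hd W}"
proof
  assume h: "{W ! k, W ! Suc k} = {last W, hd W}"
  have l: "last W = W ! (length W - 1)" "hd W = W ! 0" proof -
    have "W \<noteq> []" using assms by auto
    then show "last W = W ! (length W - 1)" "hd W = W ! 0" by (simp_all add: last_conv_nth hd_conv_nth)
  qed
  have "(W ! k = W ! (length W - 1) \<and> W ! Suc k = W ! 0) \<or> (W ! k = W ! 0 \<and> W ! Suc k = W ! (length W - 1))"
    using h unfolding l doubleton_eq_iff by blast
  have Wne: "W \<noteq> []" using assms by auto
  show False using \<open>(W ! k = W ! (length W - 1) \<and> W ! Suc k = W ! 0) \<or> _\<close>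
  proof
    assume "W ! k = W ! (length W - 1) \<and> W ! Suc k = W ! 0"
    then have "k = length W - 1" using assms nth_eq_iff_index_eq[OF assms(1), of k "length W - 1"] by simp
    then show False using assms by simp
  next
    assume "W ! k = W ! 0 \<and> W ! Suc k = W ! (length W - 1)"
    then have "k = 0" "Suc k = length W - 1"
      using nth_eq_iff_index_eq[OF assms(1), of k 0] nth_eq_iff_index_eq[OF assms(1), of "Suc k" "length W - 1"] assms Wne by auto
    then show False using assms by simp
  qed
qed

lemma remove_cycle_edge_connected:
  assumes conn: "connected_graph VS F" and W: "is_walk VS F W" "distinct W" "length W \<ge> 3"
    and f: "f = {last W, hd W}"
  shows "connected_graph VS (F - {f})"
proof -
  have Wne: "W \<noteq> []" using W(1) unfolding is_walk_def by auto
  have W': "is_walk VS (F - {f}) W" using W f cycle_edge_notin unfolding is_walk_def by blast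
  have r1: "reach VS (F - {f}) (hd W) (last W)" using W' unfolding reach_def by blast
  have r2: "reach VS (F - {f}) (last W) (hd W)" using reach_sym[OF r1] .
  have rV: "hd W \<in> VS" using W Wne unfolding is_walk_def by auto
  show ?thesis
  proof (rule connected_root[OF rV])
    fix x assume x: "x \<in> VS"
    obtain Wx where Wx: "is_walk VS F Wx" "hd Wx = x" "last Wx = hd W"
      using connected_reach[OF conn x rV] unfolding reach_def by blast
    have "set Wx \<subseteq> {z. reach VS (F - {f}) z (hd W)}"
    proof (rule closure_last[OF Wx(1)])
      show "last Wx \<in> {z. reach VS (F - {f}) z (hd W)}" using Wx(3) reach_refl[OF rV] by simp
    next
      fix a b assume ab: "a \<in> VS" "{a, b} \<in> F" "b \<in> {z. reach VS (F - {f}) z (hd W)}"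
      show "a \<in> {z. reach VS (F - {f}) z (hd W)}"
      proof (cases "{a, b} = f")
        case False
        then show ?thesis using reach_step[of a VS b "F - {f}"] ab by auto
      next
        case True
        then have "reach VS (F - {f}) a b"
          using f r1 r2 ab(1) reach_refl by (auto simp: doubleton_eq_iff)
        then show ?thesis using ab(3) reach_trans by fastforce
      qed
    qed
    moreover have "x \<in> set Wx" using Wx unfolding is_walk_def by auto
    ultimately show "reach VS (F - {f}) x (hd W)" by auto
  qed
qed

lemma spanning_tree:
  assumes "finite F" "connected_graph VS F" "VS \<noteq> {}" "F \<subseteq> E" "\<forall>e\<in>F. e \<subseteq> VS" "VS \<subseteq> V"
  shows "\<exists>F'\<subseteq>F. is_subtree V E VS F'"
  using assms
proof (induction "card F" arbitrary: F rule: less_induct)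
  case less
  show ?case
  proof (cases "has_cycle VS F")
    case False
    then show ?thesis using less.prems unfolding is_subtree_def by blast
  next
    case True
    then obtain W where W: "is_walk VS F W" "distinct W" "length W \<ge> 3" "{last W, hd W} \<in> F"
      unfolding has_cycle_def by blast
    define f where "f = {last W, hd W}"
    have c: "connected_graph VS (F - {f})"
      using remove_cycle_edge_connected[OF less.prems(2) W(1-3) f_def] .
    have "card (F - {f}) < card F" using W(4) less.prems(1) f_def
      by (metis card_Diff1_less)
    then obtain F' where "F' \<subseteq> F - {f}" "is_subtree V E VS F'"
      using less.hyps[of "F - {f}"] less.prems c by blast
    then show ?thesis by blast
  qed
qed

theorem proposition1:
  fixes V :: "'v set" and E :: "'v set set"
    and c :: "'v set \<Rightarrow> real" and p :: "'v \<Rightarrow> real"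
    and vi vj :: 'v
  assumes "finite V" "V \<noteq> {}"
    and "simple_graph V E"
    and "connected_graph V E"
    and "\<forall>e\<in>E. c e \<in> \<rat> \<and> c e > 0"
    and "\<forall>v\<in>V. p v \<in> \<rat> \<and> p v \<ge> 0"
    and "{vi, vj} \<in> E"
    and "c {vi, vj} > d_pc V E c p vi vj"
  shows "\<forall>VS ES. optimal_solution V E c p VS ES \<longrightarrow> {vi, vj} \<notin> ES"
proof (intro allI impI notI)
  fix VS ES assume opt: "optimal_solution V E c p VS ES" and eES: "{vi, vj} \<in> ES"
  define e where "e = {vi, vj}"
  have tree: "is_subtree V E VS ES" using opt unfolding optimal_solution_def by blast
  have better: "\<And>VS' ES'. is_subtree V E VS' ES' \<Longrightarrow> pcst_cost V c p VS ES \<le> pcst_cost V c p VS' ES'"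
    using opt unfolding optimal_solution_def by blast
  have EV: "E \<subseteq> Pow V" using assms(3) unfolding simple_graph_def by auto
  have finE: "finite E" using finite_subset[OF EV] assms(1) by blast
  have ESE: "ES \<subseteq> E" using tree unfolding is_subtree_def by blast
  have finES: "finite ES" using finite_subset[OF ESE finE] .
  have cpos: "\<And>x. x \<in> E \<Longrightarrow> c x > 0" using assms(5) by blast
  have pnn: "\<And>x. x \<in> V \<Longrightarrow> p x \<ge> 0" using assms(6) by blast
  have VSV: "VS \<subseteq> V" and VSne: "VS \<noteq> {}" and ESin: "\<forall>e\<in>ES. e \<subseteq> VS"
    and connT: "connected_graph VS ES" using tree unfolding is_subtree_def by blast+
  have viV: "vi \<in> VS" "vj \<in> VS" using ESin eES by auto
  have vij: "vi \<noteq> vj" using assms(3,7) unfolding simple_graph_def by (auto simp: doubleton_eq_iff)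
  define F0 where "F0 = ES - {e}"
  have sumF0: "sum c F0 = sum c ES - c e" unfolding F0_def e_def using eES finES by (simp add: sum_diff1)
  have cover: "\<And>x. x \<in> VS \<Longrightarrow> reach VS F0 x vi \<or> reach VS F0 x vj"
  proof -
    fix x assume x: "x \<in> VS"
    obtain Wx where Wx: "is_walk VS ES Wx" "hd Wx = x" "last Wx = vi"
      using connected_reach[OF connT x viV(1)] unfolding reach_def by blast
    have "set Wx \<subseteq> {z. reach VS F0 z vi \<or> reach VS F0 z vj}"
    proof (rule closure_last[OF Wx(1)])
      show "last Wx \<in> {z. reach VS F0 z vi \<or> reach VS F0 z vj}" using Wx(3) reach_refl[OF viV(1)] by simp
    next
      fix a b assume ab: "a \<in> VS" "{a, b} \<in> ES" "b \<in> {z. reach VS F0 z vi \<or> reach VS F0 z vj}"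
      show "a \<in> {z. reach VS F0 z vi \<or> reach VS F0 z vj}"
      proof (cases "{a, b} = e")
        case False
        then have "{a,b} \<in> F0" using ab unfolding F0_def by auto
        then show ?thesis using reach_step[of a VS b F0] ab by auto
      next
        case True
        then have "a = vi \<or> a = vj" unfolding e_def by (auto simp: doubleton_eq_iff)
        then show ?thesis using reach_refl[OF viV(1), of F0] reach_refl[OF viV(2), of F0] by blast
      qed
    qed
    moreover have "x \<in> set Wx" using Wx unfolding is_walk_def by auto
    ultimately show "reach VS F0 x vi \<or> reach VS F0 x vj" by auto
  qed
  have F0E: "F0 \<subseteq> E" "F0 \<subseteq> ES" using ESE unfolding F0_def by auto
  have finF0: "finite F0" using finite_subset[OF F0E(2) finES] .
  have ce: "c e > 0" using cpos assms(7) e_def by auto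
  have old: "pcst_cost V c p VS ES = sum c ES + sum p (V - VS)" unfolding pcst_cost_def by simp
  show False
  proof (cases "reach VS F0 vj vi")
    case True
    have "connected_graph VS F0"
    proof (rule connected_root[OF viV(1)])
      fix x assume "x \<in> VS"
      then show "reach VS F0 x vi" using cover[of x] True reach_trans[of VS F0 x vj vi] by blast
    qed
    then obtain F' where F': "F' \<subseteq> F0" "is_subtree V E VS F'"
      using spanning_tree[OF finF0 \<open>connected_graph VS F0\<close> VSne F0E(1) _ VSV] ESin F0E(2) by auto
    have "sum c F' \<le> sum c F0"
      by (rule sum_mono2[OF finF0 F'(1)]) (use cpos F0E in \<open>force\<close>)
    then have "pcst_cost V c p VS F' < pcst_cost V c p VS ES"
      unfolding pcst_cost_def using sumF0 ce by linarith
    then show False using better[OF F'(2)] by linarith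
  next
    case False
    note notr = False
    have "[vi, vj] \<in> {W. pc_walk V E p vi vj W}"
      using assms(7) viV VSV vij unfolding pc_walk_def is_walk_def by auto
    then have Xne: "{l_pc V c p vi vj W | W. pc_walk V E p vi vj W} \<noteq> {}" by blast
    obtain W where pcW: "pc_walk V E p vi vj W" and lW: "l_pc V c p vi vj W < c e"
      using cInf_lessD[OF Xne, of "c e"] assms(8) unfolding d_pc_def e_def by blast
    have Ww: "is_walk V E W" "hd W = vi" "last W = vj" using pcW unfolding pc_walk_def by auto
    have Wne: "W \<noteq> []" using Ww unfolding is_walk_def by auto
    define n where "n = length W"
    have n0: "n > 0" using Wne n_def by simp
    have W0: "W ! 0 = vi" using Ww Wne by (simp add: hd_conv_nth)
    have Wl: "W ! (n - 1) = vj" using Ww Wne n_def by (simp add: last_conv_nth)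
    define S where "S = Tp V p \<union> {vi, vj}"
    define G where "G = {i. i < n \<and> W ! i \<in> S \<and> W ! i \<in> VS \<and> reach VS F0 (W ! i) vi}"
    have finG: "finite G" unfolding G_def by simp
    have "0 \<in> G" unfolding G_def S_def using n0 W0 viV reach_refl by auto
    define s where "s = Max G"
    have sG: "s \<in> G" using finG \<open>0 \<in> G\<close> s_def Max_in by blast
    have nG: "n - 1 \<notin> G" using notr Wl unfolding G_def by auto
    have sn: "s < n - 1" using sG nG unfolding G_def by (cases "s = n - 1") auto
    define H where "H = {i. s < i \<and> i < n \<and> W ! i \<in> S \<and> W ! i \<in> VS}"
    have "n - 1 \<in> H" unfolding H_def S_def using sn Wl viV by auto
    have finH: "finite H" unfolding H_def by simp
    define u where "u = Min H"
    have uH: "u \<in> H" using finH \<open>n - 1 \<in> H\<close> u_def Min_in by blast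
    have umin: "\<And>j. j \<in> H \<Longrightarrow> u \<le> j" using finH u_def by simp
    have su: "s < u" "u < n" "W ! u \<in> S" "W ! u \<in> VS" using uH H_def by auto
    have sprops: "s < n" "W ! s \<in> S" "W ! s \<in> VS" "reach VS F0 (W ! s) vi" using sG G_def by auto
    have unA: "\<not> reach VS F0 (W ! u) vi"
    proof
      assume "reach VS F0 (W ! u) vi"
      then have "u \<in> G" using su unfolding G_def by auto
      then have "u \<le> s" using finG s_def by simp
      then show False using su by simp
    qed
    have ureach: "reach VS F0 (W ! u) vj" using cover[OF su(4)] unA by blast
    define seg where "seg = subwalk W s u"
    have sle: "s \<le> u" using su by simp
    have ulen: "u < length W" using su n_def by simp
    have segw: "is_walk V E seg" unfolding seg_def using subwalk_walk[OF Ww(1) sle ulen] .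
    have segne: "seg \<noteq> []" using segw unfolding is_walk_def by auto
    have seghd: "hd seg = W ! s" and seglast: "last seg = W ! u"
      unfolding seg_def using subwalk_hd[OF sle ulen] subwalk_last[OF sle ulen] by auto
    define WE where "WE = walk_edges seg"
    define VS' where "VS' = VS \<union> set seg"
    define ES' where "ES' = F0 \<union> WE"
    have WEE: "WE \<subseteq> E" unfolding WE_def using walk_edges_sub[OF segw] .
    have finWE: "finite WE" using finite_subset[OF WEE finE] .
    have segV: "set seg \<subseteq> V" using segw unfolding is_walk_def by auto
    have segw': "is_walk VS' ES' seg"
      using reach_mono walk_self[OF segne] unfolding VS'_def ES'_def WE_def is_walk_def by blast
    have allVS: "\<And>x. x \<in> VS \<Longrightarrow> reach VS' ES' x vi"
    proof -
      have sub: "VS \<subseteq> VS'" "F0 \<subseteq> ES'" unfolding VS'_def ES'_def by auto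
      have r1: "reach VS' ES' (W ! s) (W ! u)" using segw' seghd seglast unfolding reach_def by blast
      have "reach VS' ES' vj vi"
        using reach_trans[OF reach_sym[OF reach_mono[OF ureach sub]]
              reach_trans[OF reach_sym[OF r1] reach_mono[OF sprops(4) sub]]] .
      fix x assume "x \<in> VS"
      then show "reach VS' ES' x vi" using cover[of x] reach_mono[OF _ sub(1) sub(2), of x vi] reach_mono[OF _ sub(1) sub(2), of x vj] reach_trans[OF _ \<open>reach VS' ES' vj vi\<close>, of x] by blast
    qed
    have connN: "connected_graph VS' ES'"
    proof (rule connected_root)
      show "vi \<in> VS'" using viV VS'_def by auto
      fix x assume x: "x \<in> VS'"
      show "reach VS' ES' x vi"
      proof (cases "x \<in> VS")
        case True then show ?thesis using allVS[OF True] by simp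
      next
        case False
        then have xs: "x \<in> set seg" using x VS'_def by auto
        have "set seg \<subseteq> {z. reach VS' ES' z vi}"
        proof (rule closure_last[OF segw'])
          show "last seg \<in> {z. reach VS' ES' z vi}" using seglast allVS[OF su(4)] by simp
          fix a b assume "a \<in> VS'" "{a, b} \<in> ES'" "b \<in> {z. reach VS' ES' z vi}"
          then show "a \<in> {z. reach VS' ES' z vi}" using reach_step[of a VS' b ES' vi] by simp
        qed
        then show ?thesis using xs by auto
      qed
    qed
    have finES': "finite ES'" unfolding ES'_def using finF0 finWE by simp
    obtain F' where F': "F' \<subseteq> ES'" "is_subtree V E VS' F'"
    proof -
      have "\<exists>F'\<subseteq>ES'. is_subtree V E VS' F'"
      proof (rule spanning_tree[OF finES' connN])
        show "VS' \<noteq> {}" using VSne VS'_def by auto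
        show "ES' \<subseteq> E" using F0E WEE ES'_def by auto
        show "\<forall>e\<in>ES'. e \<subseteq> VS'"
        proof
          fix e' assume "e' \<in> ES'"
          then show "e' \<subseteq> VS'" using ESin F0E(2) walk_edges_in[of e' seg] unfolding ES'_def VS'_def WE_def by auto
        qed
        show "VS' \<subseteq> V" using VSV segV VS'_def by auto
      qed
      then show ?thesis using that by blast
    qed
    have cnn: "\<And>x. x \<in> E \<Longrightarrow> c x \<ge> 0" using cpos less_imp_le by blast
    have c1: "sum c F' \<le> sum c ES'"
      by (rule sum_mono2[OF finES' F'(1)]) (use cnn F0E WEE in \<open>auto simp: ES'_def\<close>)
    have "sum c (F0 \<inter> WE) \<ge> 0" using cnn WEE by (intro sum_nonneg) auto
    then have c2: "sum c ES' \<le> sum c F0 + sum c WE"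
      unfolding ES'_def using sum_Un[OF finF0 finWE, of c] by linarith
    have dsj: "V - VS = (V - VS') \<union> (set seg - VS)" "(V - VS') \<inter> (set seg - VS) = {}"
      using segV unfolding VS'_def by auto
    have p1: "sum p (V - VS) = sum p (V - VS') + sum p (set seg - VS)"
      using dsj assms(1) by (simp add: sum.union_disjoint)
    define I where "I = set seg - {W ! s, W ! u}"
    define P where "P = {x. p x > 0}"
    have finI: "finite I" unfolding I_def by simp
    have "sum p I = sum p (I \<inter> P) + sum p (I - P)"
      using finI by (metis Diff_Int2 Diff_Int_distrib2 inf.idem sum.Int_Diff)
    moreover have "sum p (I - P) = 0"
    proof (rule sum.neutral, intro ballI)
      fix x assume "x \<in> I - P"
      then have "x \<in> V" "\<not> p x > 0" using segV I_def P_def by auto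
      then show "p x = 0" using pnn by force
    qed
    moreover have "sum p (I \<inter> P) \<le> sum p (set seg - VS)"
    proof (rule sum_mono2)
      show "finite (set seg - VS)" by simp
      show "I \<inter> P \<subseteq> set seg - VS"
      proof
        fix x assume x: "x \<in> I \<inter> P"
        then have xs: "x \<in> set seg" "x \<noteq> W ! s" "x \<noteq> W ! u" "p x > 0" unfolding I_def P_def by auto
        obtain j where j: "s \<le> j" "j \<le> u" "x = W ! j" using subwalk_set[OF sle ulen] xs(1) seg_def by blast
        have jj: "s < j" "j < u" using j xs by (auto simp: le_less)
        have "x \<in> S" using xs segV unfolding S_def Tp_def by auto
        have "x \<notin> VS"
        proof
          assume "x \<in> VS"
          then have "j \<in> H" using jj su \<open>x \<in> S\<close> j unfolding H_def by auto
          then show False using umin jj by fastforce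
        qed
        then show "x \<in> set seg - VS" using xs by auto
      qed
      show "\<And>b. b \<in> set seg - VS - I \<inter> P \<Longrightarrow> 0 \<le> p b" using segV pnn by auto
    qed
    ultimately have pI: "sum p I \<le> sum p (set seg - VS)" by linarith
    have cpc: "c_pc c p seg = sum c WE - sum p I"
      unfolding c_pc_def WE_def I_def using seghd seglast by simp
    define Y where "Y = {c_pc c p (subwalk W k l) | k l.
      k \<le> l \<and> l < length W \<and> W ! k \<in> Tp V p \<union> {vi, vj} \<and> W ! l \<in> Tp V p \<union> {vi, vj}}"
    have finY: "finite Y"
    proof (rule finite_subset)
      show "Y \<subseteq> (\<lambda>(k,l). c_pc c p (subwalk W k l)) ` ({..<length W} \<times> {..<length W})"
        unfolding Y_def by auto
    qed simp
    have "c_pc c p seg \<in> Y" unfolding Y_def seg_def using sle ulen su(3) sprops(2) S_def by blast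
    then have "c_pc c p seg \<le> Max Y" using finY by simp
    then have "c_pc c p seg < c e" using lW unfolding l_pc_def Y_def by simp
    then have "pcst_cost V c p VS' F' < pcst_cost V c p VS ES"
      unfolding pcst_cost_def using c1 c2 sumF0 p1 pI cpc by linarith
    then show False using better[OF F'(2)] by linarith
  qed
qed

end
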